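(* (a) The space $\mathcal H^-_{4,\tau}$ is one-dimensional, spanned by $\theta^-_4=\theta_{1,4}-\theta_{3,4}$. (b) For every positive integer $k$, the map $\mathcal H^+_{2k,\tau}\to\mathcal H^-_{2k+4,\tau}$, $\theta^+\mapsto\theta^-_4\,\theta^+$, is a linear isomorphism.
   Context: $\tau\in\mathbb C$, $\mathrm{Im}\,\tau>0$. For a positive integer $k'$ and $0\le m<k'$, $\theta_{m,k'}(z)=\sum_{p\in\mathbb Z}\exp\big(\pi i\frac{\tau}{k'}(m+k'p)^2+2\pi i(m+k'p)z\big)$; these span the holomorphic sections of $L_1^{k'}$ on $X_\tau=\mathbb C/(\mathbb Z+\tau\mathbb Z)$ (pulled back to $\mathbb C$), where $L_1$ has factors of automorphy $e(a+\tau p,z)=\exp(-2\pi ipz-\pi i\tau p^2)$. $\mathcal H^+_{k',\tau}$ and $\mathcal H^-_{k',\tau}$ are the even, resp. odd (under $z\mapsto-z$), elements of this span. *)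

theory Defs
  imports "HOL-Analysis.Analysis"
begin

definition theta :: "nat \<Rightarrow> nat \<Rightarrow> complex \<Rightarrow> complex \<Rightarrow> complex" where
  "theta m k' \<tau> z =
     (\<Sum>\<^sub>\<infinity>p::int. exp (pi * \<i> * (\<tau> / of_nat k') * (of_int (int m + int k' * p))^2
                         + 2 * pi * \<i> * of_int (int m + int k' * p) * z))"

definition Hspace :: "nat \<Rightarrow> complex \<Rightarrow> (complex \<Rightarrow> complex) set" where
  "Hspace k' \<tau> = {f. \<exists>c :: nat \<Rightarrow> complex. f = (\<lambda>z. \<Sum>m<k'. c m * theta m k' \<tau> z)}"

definition Hplus :: "nat \<Rightarrow> complex \<Rightarrow> (complex \<Rightarrow> complex) set" where
  "Hplus k' \<tau> = {f \<in> Hspace k' \<tau>. \<forall>z. f (- z) = f z}"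

definition Hminus :: "nat \<Rightarrow> complex \<Rightarrow> (complex \<Rightarrow> complex) set" where
  "Hminus k' \<tau> = {f \<in> Hspace k' \<tau>. \<forall>z. f (- z) = - f z}"

definition theta4_minus :: "complex \<Rightarrow> complex \<Rightarrow> complex" where
  "theta4_minus \<tau> z = theta 1 4 \<tau> z - theta 3 4 \<tau> z"

end

theory Submission
  imports Defs "HOL-Complex_Analysis.Complex_Analysis" "HOL-Library.Function_Algebras"
begin

definition tm :: "nat \<Rightarrow> complex \<Rightarrow> complex \<Rightarrow> int \<Rightarrow> complex" where
  "tm K \<tau> z n = exp (pi * \<i> * (\<tau> / of_nat K) * (of_int n)^2 + 2 * pi * \<i> * of_int n * z)"

definition Th :: "nat \<Rightarrow> complex \<Rightarrow> int \<Rightarrow> complex \<Rightarrow> complex" where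
  "Th K \<tau> m z = (\<Sum>\<^sub>\<infinity>p::int. tm K \<tau> z (m + int K * p))"

lemma theta_Th: "theta m K \<tau> z = Th K \<tau> (int m) z"
  by (simp add: theta_def Th_def tm_def)

lemma norm_tm: "norm (tm K \<tau> z n) = exp (- pi * Im \<tau> / K * (of_int n)^2 - 2 * pi * of_int n * Im z)"
  by (simp add: tm_def norm_exp_eq_Re field_simps power2_eq_square)

lemma quad_bound:
  fixes a b x :: real assumes "a > 0"
  shows "b * x - a * x^2 \<le> b^2 / (4*a)"
proof -
  have "b^2/(4*a) - (b*x - a*x^2) = (2*a*x - b)^2/(4*a)" using assms by (simp add: field_simps power2_eq_square)
  moreover have "(2*a*x - b)^2/(4*a) \<ge> 0" using assms by simp
  ultimately show ?thesis by linarith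
qed

lemma summable_exp_abs: "(\<lambda>p::int. exp (- real_of_int \<bar>p\<bar>)) summable_on UNIV"
proof -
  have g: "summable (\<lambda>n::nat. exp (-1::real) ^ n)" using summable_geometric[of "exp (-1::real)"] by simp
  have g2: "(\<lambda>n::nat. exp (- real n)) summable_on UNIV"
    proof -
    have "exp (- real n) = exp (-1) ^ n" for n
      by (simp add: exp_of_nat_mult[symmetric])
    thus ?thesis using g by (subst summable_on_UNIV_nonneg_real_iff) auto
  qed
  have "(\<lambda>p::int. exp (- real_of_int \<bar>p\<bar>)) summable_on (int ` UNIV)"
    using g2 by (subst summable_on_reindex) (auto simp: o_def)
  moreover have "(\<lambda>p::int. exp (- real_of_int \<bar>p\<bar>)) summable_on ((\<lambda>n. - int n) ` UNIV)"
    using g2 by (subst summable_on_reindex) (auto simp: o_def inj_on_def)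
  ultimately have "(\<lambda>p::int. exp (- real_of_int \<bar>p\<bar>)) summable_on (int ` UNIV \<union> (\<lambda>n. - int n) ` UNIV)"
    by (rule summable_on_union)
  moreover have "int ` UNIV \<union> (\<lambda>n. - int n) ` UNIV = UNIV"
  proof -
    have "p \<in> int ` UNIV \<union> (\<lambda>n. - int n) ` UNIV" for p :: int
    proof (cases "p \<ge> 0")
      case True
      hence "p = int (nat p)" by simp
      hence "p \<in> int ` UNIV" by (rule image_eqI) simp
      thus ?thesis by (rule UnI1)
    next
      case False
      hence "p = - int (nat (-p))" by simp
      hence "p \<in> (\<lambda>n. - int n) ` UNIV" by (rule image_eqI) simp
      thus ?thesis by (rule UnI2)
    qed
    thus ?thesis by blast
  qed
  ultimately show ?thesis by simp
qed

lemma tm_bound: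
  assumes K: "K > 0" and t: "Im \<tau> > 0" and y: "\<bar>Im z\<bar> \<le> Y"
  shows "norm (tm K \<tau> z n) \<le> exp ((2*pi*Y+1)^2 / (4*(pi*Im \<tau>/K)) - real_of_int \<bar>n\<bar>)"
proof -
  define a where "a = pi * Im \<tau> / K"
  have a: "a > 0" using K t by (simp add: a_def)
  have "- 2 * pi * of_int n * Im z \<le> 2*pi*Y * \<bar>of_int n\<bar>"
  proof -
    have "\<bar>of_int n * Im z\<bar> \<le> \<bar>of_int n\<bar> * Y" using y by (simp add: abs_mult mult_left_mono)
    hence "- (of_int n * Im z) \<le> \<bar>of_int n\<bar> * Y" by linarith
    hence "2*pi*(- (of_int n * Im z)) \<le> 2*pi*(\<bar>of_int n\<bar> * Y)"
      by (intro mult_left_mono) auto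
    thus ?thesis by (simp add: algebra_simps)
  qed
  moreover have "(2*pi*Y+1) * \<bar>real_of_int n\<bar> - a * \<bar>real_of_int n\<bar>^2 \<le> (2*pi*Y+1)^2/(4*a)"
    by (rule quad_bound[OF a])
  ultimately have "- a * (of_int n)^2 - 2 * pi * of_int n * Im z \<le> (2*pi*Y+1)^2/(4*a) - \<bar>real_of_int n\<bar>"
    by (simp add: algebra_simps)
  thus ?thesis unfolding norm_tm a_def[symmetric] by (simp add: a_def)
qed


lemma tm_abs_summable:
  assumes K: "K > 0" and t: "Im \<tau> > 0" and c: "c \<noteq> 0" and y: "\<And>z. z \<in> S \<Longrightarrow> \<bar>Im z\<bar> \<le> Y"
  shows "\<exists>B. B summable_on UNIV \<and> (\<forall>p. B p \<ge> 0) \<and> (\<forall>z\<in>S. \<forall>p. norm (tm K \<tau> z (m + c * p)) \<le> B p)"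
proof -
  define C where "C = (2*pi*Y+1)^2 / (4*(pi*Im \<tau>/K))"
  define B where "B p = exp (C + real_of_int \<bar>m\<bar>) * exp (- real_of_int \<bar>p\<bar>)" for p :: int
  have "B summable_on UNIV" unfolding B_def
    by (intro summable_on_cmult_right summable_exp_abs)
  moreover have "norm (tm K \<tau> z (m + c * p)) \<le> B p" if "z \<in> S" for z p
  proof -
    have "norm (tm K \<tau> z (m + c * p)) \<le> exp (C - real_of_int \<bar>m + c * p\<bar>)"
      unfolding C_def by (rule tm_bound[OF K t y[OF that]])
    also have "\<dots> \<le> exp (C + real_of_int \<bar>m\<bar> - real_of_int \<bar>p\<bar>)"
    proof -
      have "1 \<le> \<bar>c\<bar>" using c by linarith
      hence "1 * \<bar>p\<bar> \<le> \<bar>c\<bar> * \<bar>p\<bar>" by (intro mult_right_mono) auto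
      hence "\<bar>p\<bar> \<le> \<bar>c * p\<bar>" by (simp add: abs_mult)
      hence "\<bar>p\<bar> \<le> \<bar>m + c * p\<bar> + \<bar>m\<bar>" by linarith
      hence "real_of_int \<bar>p\<bar> \<le> real_of_int \<bar>m + c * p\<bar> + real_of_int \<bar>m\<bar>" by linarith
      thus ?thesis by simp
    qed
    also have "\<dots> = B p" by (simp add: B_def exp_add[symmetric] exp_diff)
    finally show ?thesis .
  qed
  ultimately show ?thesis by (intro exI[of _ B]) (auto simp: B_def)
qed

lemma tm_summable:
  assumes K: "K > 0" and t: "Im \<tau> > 0" and c: "c \<noteq> 0"
  shows "(\<lambda>p. norm (tm K \<tau> z (m + c * p))) summable_on UNIV"
proof -
  obtain B where B: "B summable_on UNIV" "\<forall>p. B p \<ge> 0" "\<forall>p. norm (tm K \<tau> z (m + c * p)) \<le> B p"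
    using tm_abs_summable[OF K t c, where S="{z}" and Y="\<bar>Im z\<bar>" and m=m] by auto
  show ?thesis by (rule Infinite_Sum.abs_summable_on_comparison_test'[OF B(1)]) (use B in auto)
qed

lemma Th_has_sum:
  assumes K: "K > 0" and t: "Im \<tau> > 0"
  shows "((\<lambda>p. tm K \<tau> z (m + int K * p)) has_sum Th K \<tau> m z) UNIV"
proof -
  have "(\<lambda>p. tm K \<tau> z (m + int K * p)) summable_on UNIV"
    by (rule abs_summable_summable, rule tm_summable) (use K t in auto)
  thus ?thesis unfolding Th_def by (rule has_sum_infsum)
qed

lemma Th_shift: "Th K \<tau> (m + int K * j) z = Th K \<tau> m z"
proof -
  have b: "bij_betw (\<lambda>p. p + j) UNIV UNIV"
    by (rule bij_betwI[of _ _ _ "\<lambda>p. p - j"]) auto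
  have "Th K \<tau> m z = (\<Sum>\<^sub>\<infinity>p. tm K \<tau> z (m + int K * (p + j)))"
    unfolding Th_def by (rule infsum_reindex_bij_betw[OF b, symmetric])
  also have "\<dots> = Th K \<tau> (m + int K * j) z"
    unfolding Th_def by (simp add: algebra_simps)
  finally show ?thesis by simp
qed

lemma Th_mod: "Th K \<tau> m z = Th K \<tau> (m mod int K) z"
  using Th_shift[of K \<tau> "m mod int K" "m div int K" z] by simp

lemma Th_cong: "m mod int K = m' mod int K \<Longrightarrow> Th K \<tau> m z = Th K \<tau> m' z"
  by (metis Th_mod)

lemma tm_neg: "tm K \<tau> (-z) n = tm K \<tau> z (-n)"
  by (simp add: tm_def)

lemma Th_neg: "Th K \<tau> m (-z) = Th K \<tau> (-m) z"
proof -
  have b: "bij_betw (\<lambda>p::int. - p) UNIV UNIV"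
    by (rule bij_betwI[of _ _ _ "\<lambda>p. - p"]) auto
  have "Th K \<tau> (-m) z = (\<Sum>\<^sub>\<infinity>p. tm K \<tau> z (- m + int K * (- p)))"
    unfolding Th_def by (rule infsum_reindex_bij_betw[OF b, symmetric])
  also have "\<dots> = Th K \<tau> m (-z)"
    unfolding Th_def tm_neg by (simp add: algebra_simps)
  finally show ?thesis by simp
qed

lemma finite_subsets_sym:
  "filterlim (\<lambda>M::nat. {- int M..int M}) (finite_subsets_at_top (UNIV::int set)) sequentially"
proof (subst filterlim_finite_subsets_at_top, intro allI impI)
  fix X :: "int set" assume X: "finite X \<and> X \<subseteq> UNIV"
  define M where "M = Max (insert 0 (abs ` X))"
  have M: "\<forall>x\<in>X. \<bar>x\<bar> \<le> M" using X by (auto simp: M_def intro!: Max_ge)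
  show "eventually (\<lambda>y. finite {- int y..int y} \<and> X \<subseteq> {- int y..int y} \<and> {- int y..int y} \<subseteq> UNIV) sequentially"
    using eventually_ge_at_top[of "nat M"]
  proof (rule eventually_mono)
    fix y assume "nat M \<le> y"
    hence "M \<le> int y" by linarith
    thus "finite {- int y..int y} \<and> X \<subseteq> {- int y..int y} \<and> {- int y..int y} \<subseteq> UNIV"
      using M by force
  qed
qed

lemma unif_int:
  fixes f :: "int \<Rightarrow> 'a \<Rightarrow> complex"
  assumes B: "B summable_on UNIV" and Bnn: "\<And>n. B n \<ge> 0"
    and bnd: "\<And>n x. x \<in> S \<Longrightarrow> norm (f n x) \<le> B n"
  shows "uniform_limit S (\<lambda>M x. \<Sum>n\<in>{-int M..int M}. f n x) (\<lambda>x. \<Sum>\<^sub>\<infinity>n. f n x) sequentially"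
proof (rule uniform_limitI)
  fix e :: real assume e: "e > 0"
  define T where "T M = (\<Sum>\<^sub>\<infinity>n\<in>- {-int M..int M}. B n)" for M :: nat
  have T_eq: "T M = infsum B UNIV - sum B {-int M..int M}" for M
  proof -
    have "infsum B UNIV = infsum B ({-int M..int M} \<union> - {-int M..int M})" by simp
    also have "\<dots> = infsum B {-int M..int M} + infsum B (- {-int M..int M})"
      by (rule infsum_Un_disjoint) (auto intro: summable_on_subset_banach[OF B])
    finally show ?thesis by (simp add: T_def)
  qed
  have "(B has_sum infsum B UNIV) UNIV" using B by simp
  hence "(sum B \<longlongrightarrow> infsum B UNIV) (finite_subsets_at_top UNIV)" by (simp add: has_sum_def)
  hence "((\<lambda>M. sum B {-int M..int M}) \<longlongrightarrow> infsum B UNIV) sequentially"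
    by (rule filterlim_compose[OF _ finite_subsets_sym])
  hence "(T \<longlongrightarrow> infsum B UNIV - infsum B UNIV) sequentially"
    unfolding T_eq by (intro tendsto_intros)
  hence "(T \<longlongrightarrow> 0) sequentially" by simp
  hence ev: "eventually (\<lambda>M. T M < e) sequentially"
    using e by (rule order_tendstoD)
  show "eventually (\<lambda>M. \<forall>x\<in>S. dist (\<Sum>n\<in>{-int M..int M}. f n x) (\<Sum>\<^sub>\<infinity>n. f n x) < e) sequentially"
    using ev
  proof (rule eventually_mono, intro ballI)
    fix M x assume TM: "T M < e" and x: "x \<in> S"
    have fs: "(\<lambda>n. norm (f n x)) summable_on UNIV"
      by (rule Infinite_Sum.abs_summable_on_comparison_test'[OF B]) (use bnd x in auto)
    hence fs': "(\<lambda>n. f n x) summable_on A" for A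
      by (intro summable_on_subset_banach[OF abs_summable_summable[OF fs]]) auto
    have "(\<Sum>\<^sub>\<infinity>n. f n x) = (\<Sum>\<^sub>\<infinity>n\<in>{-int M..int M} \<union> - {-int M..int M}. f n x)" by simp
    also have "\<dots> = (\<Sum>\<^sub>\<infinity>n\<in>{-int M..int M}. f n x) + (\<Sum>\<^sub>\<infinity>n\<in>- {-int M..int M}. f n x)"
      by (rule infsum_Un_disjoint) (auto intro: fs')
    finally have eq: "(\<Sum>\<^sub>\<infinity>n. f n x) - (\<Sum>n\<in>{-int M..int M}. f n x) = (\<Sum>\<^sub>\<infinity>n\<in>- {-int M..int M}. f n x)"
      by simp
    have fsA: "(\<lambda>n. norm (f n x)) summable_on (- {-int M..int M})"
      by (rule summable_on_subset_banach[OF fs]) auto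
    have "norm (\<Sum>\<^sub>\<infinity>n\<in>- {-int M..int M}. f n x) \<le> (\<Sum>\<^sub>\<infinity>n\<in>- {-int M..int M}. norm (f n x))"
      by (rule norm_infsum_bound[OF fsA])
    also have "\<dots> \<le> T M" unfolding T_def
      by (rule infsum_mono[OF fsA]) (auto intro: summable_on_subset_banach[OF B] bnd x)
    finally have "norm (\<Sum>\<^sub>\<infinity>n\<in>- {-int M..int M}. f n x) < e" using TM by simp
    thus "dist (\<Sum>n\<in>{-int M..int M}. f n x) (\<Sum>\<^sub>\<infinity>n. f n x) < e"
      by (simp add: dist_norm norm_minus_commute eq)
  qed
qed


lemma Th_unif:
  assumes K: "K > 0" and t: "Im \<tau> > 0" and y: "\<And>z. z \<in> S \<Longrightarrow> \<bar>Im z\<bar> \<le> Y"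
  shows "uniform_limit S (\<lambda>M z. \<Sum>p\<in>{-int M..int M}. tm K \<tau> z (m + int K * p)) (Th K \<tau> m) sequentially"
proof -
  obtain B where B: "B summable_on UNIV" "\<forall>p. B p \<ge> 0" "\<forall>z\<in>S. \<forall>p. norm (tm K \<tau> z (m + int K * p)) \<le> B p"
  proof -
    have c: "int K \<noteq> 0" using K by simp
    show ?thesis using tm_abs_summable[OF K t c y, where m=m] that by blast
  qed
  have "uniform_limit S (\<lambda>M z. \<Sum>p\<in>{-int M..int M}. tm K \<tau> z (m + int K * p)) (\<lambda>z. \<Sum>\<^sub>\<infinity>p. tm K \<tau> z (m + int K * p)) sequentially"
    by (rule unif_int[OF B(1)]) (use B in auto)
  thus ?thesis unfolding Th_def[abs_def] .
qed

lemma Th_holo: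
  assumes K: "K > 0" and t: "Im \<tau> > 0"
  shows "Th K \<tau> m holomorphic_on UNIV"
proof (rule holomorphic_uniform_sequence[OF open_UNIV])
  show "(\<lambda>z. \<Sum>p\<in>{-int M..int M}. tm K \<tau> z (m + int K * p)) holomorphic_on UNIV" for M
    unfolding tm_def by (intro holomorphic_intros)
  fix x :: complex
  have "uniform_limit (cball x 1) (\<lambda>M z. \<Sum>p\<in>{-int M..int M}. tm K \<tau> z (m + int K * p)) (Th K \<tau> m) sequentially"
  proof (rule Th_unif[OF K t])
    fix z assume "z \<in> cball x 1"
    hence "norm (z - x) \<le> 1" by (simp add: dist_norm norm_minus_commute)
    moreover have "\<bar>Im (z - x)\<bar> \<le> norm (z - x)" by (rule abs_Im_le_cmod)
    ultimately show "\<bar>Im z\<bar> \<le> \<bar>Im x\<bar> + 1" by simp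
  qed
  thus "\<exists>d>0. cball x d \<subseteq> UNIV \<and> uniform_limit (cball x d) (\<lambda>M z. \<Sum>p\<in>{-int M..int M}. tm K \<tau> z (m + int K * p)) (Th K \<tau> m) sequentially"
    by (intro exI[of _ 1]) auto
qed

lemma Th_cont:
  assumes K: "K > 0" and t: "Im \<tau> > 0"
  shows "continuous_on A (Th K \<tau> m)"
  using holomorphic_on_imp_continuous_on[OF Th_holo[OF K t]] continuous_on_subset by blast

lemma exp_int_integral:
  "((\<lambda>x::real. exp (2 * pi * \<i> * of_int j * of_real x)) has_integral (if j = 0 then 1 else 0)) {0..1}"
proof (cases "j = 0")
  case True thus ?thesis using has_integral_const_real[of "1::complex" 0 1] by simp
next
  case False
  define c where "c = 2 * pi * \<i> * of_int j"
  have c: "c \<noteq> 0" using False by (simp add: c_def)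
  have d: "((\<lambda>x::real. exp (c * of_real x) / c) has_vector_derivative exp (c * of_real x)) (at x within {0..1})" for x
  proof -
    have "((\<lambda>w. exp (c * w) / c) has_field_derivative exp (c * of_real x)) (at (of_real x))"
      using c by (auto intro!: derivative_eq_intros)
    thus ?thesis by (rule has_vector_derivative_real_field)
  qed
  have "((\<lambda>x::real. exp (c * of_real x)) has_integral (exp (c * of_real 1) / c - exp (c * of_real 0) / c)) {0..1}"
    by (rule fundamental_theorem_of_calculus) (use d in auto)
  moreover have "exp c = 1"
  proof -
    have "exp ((2 * of_int j * pi) * \<i>) = 1" by (rule exp_integer_2pi) simp
    thus ?thesis by (simp add: c_def mult_ac)
  qed
  ultimately show ?thesis using False by (simp add: c_def)
qed

lemma tm_mult_exp:
  "tm K \<tau> (of_real x) k * exp (- 2 * pi * \<i> * of_int n * of_real x)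
     = tm K \<tau> 0 k * exp (2 * pi * \<i> * of_int (k - n) * of_real x)"
  by (simp add: tm_def exp_add[symmetric] algebra_simps)

lemma Th_fourier:
  assumes K: "K > 0" and t: "Im \<tau> > 0"
  shows "((\<lambda>x::real. Th K \<tau> m (of_real x) * exp (- 2 * pi * \<i> * of_int n * of_real x))
           has_integral (if n mod int K = m mod int K then tm K \<tau> 0 n else 0)) {0..1}"
proof -
  define e where "e x = exp (- 2 * pi * \<i> * of_int n * of_real x)" for x :: real
  define f where "f M x = (\<Sum>p\<in>{-int M..int M}. tm K \<tau> (of_real x) (m + int K * p) * e x)" for M x
  define g where "g x = Th K \<tau> m (of_real x) * e x" for x
  have ne: "norm (e x) = 1" for x by (simp add: e_def norm_exp_eq_Re)
  have ul: "uniform_limit {0..1} f g sequentially"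
  proof -
    have "uniform_limit (of_real ` {0..1::real}) (\<lambda>M z. \<Sum>p\<in>{-int M..int M}. tm K \<tau> z (m + int K * p)) (Th K \<tau> m) sequentially"
      by (rule Th_unif[OF K t, where Y=0]) auto
    hence u1: "uniform_limit {0..1::real} (\<lambda>M x. \<Sum>p\<in>{-int M..int M}. tm K \<tau> (of_real x) (m + int K * p)) (\<lambda>x. Th K \<tau> m (of_real x)) sequentially"
      unfolding uniform_limit_iff by (auto simp: dist_norm)
    have "uniform_limit {0..1::real} (\<lambda>M x. (\<Sum>p\<in>{-int M..int M}. tm K \<tau> (of_real x) (m + int K * p)) * e x) (\<lambda>x. Th K \<tau> m (of_real x) * e x) sequentially"
      unfolding uniform_limit_iff
    proof (intro allI impI)
      fix \<epsilon> :: real assume "\<epsilon> > 0"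
      hence "eventually (\<lambda>M. \<forall>x\<in>{0..1}. dist (\<Sum>p\<in>{-int M..int M}. tm K \<tau> (of_real x) (m + int K * p)) (Th K \<tau> m (of_real x)) < \<epsilon>) sequentially"
        using u1 unfolding uniform_limit_iff by blast
      thus "eventually (\<lambda>M. \<forall>x\<in>{0..1}. dist ((\<Sum>p\<in>{-int M..int M}. tm K \<tau> (of_real x) (m + int K * p)) * e x) (Th K \<tau> m (of_real x) * e x) < \<epsilon>) sequentially"
        by (rule eventually_mono) (simp add: dist_norm ne left_diff_distrib[symmetric] norm_mult)
    qed
    thus ?thesis unfolding f_def g_def by (simp add: sum_distrib_right)
  qed
  have cont: "continuous_on {0..1} (f M)" for M
    unfolding f_def e_def tm_def by (intro continuous_intros)
  obtain I J where I: "\<And>M. (f M has_integral I M) {0..1}" and J: "(g has_integral J) {0..1}"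
    and IJ: "(I \<longlongrightarrow> J) sequentially"
    by (rule uniform_limit_integral[OF ul cont]) auto
  define v where "v = (if n mod int K = m mod int K then tm K \<tau> 0 n else 0)"
  have fi: "(f M has_integral (\<Sum>p\<in>{-int M..int M}. tm K \<tau> 0 (m + int K * p) * (if m + int K * p - n = 0 then 1 else 0))) {0..1}" for M
    unfolding f_def e_def tm_mult_exp
    by (intro has_integral_sum has_integral_mult_right exp_int_integral) auto
  have "eventually (\<lambda>M. I M = v) sequentially"
    using eventually_ge_at_top[of "nat \<bar>n - m\<bar>"]
  proof (rule eventually_mono)
    fix M assume M: "nat \<bar>n - m\<bar> \<le> M"
    have "I M = (\<Sum>p\<in>{-int M..int M}. tm K \<tau> 0 (m + int K * p) * (if m + int K * p - n = 0 then 1 else 0))"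
      using I fi has_integral_unique by blast
    also have "\<dots> = v"
    proof (cases "n mod int K = m mod int K")
      case True
      define p0 where "p0 = (n - m) div int K"
      have dv: "int K dvd (n - m)" using True by (simp add: mod_eq_dvd_iff)
      hence np: "n = m + int K * p0" by (simp add: p0_def)
      have iff: "m + int K * p - n = 0 \<longleftrightarrow> p = p0" for p using K np by auto
      have "\<bar>p0\<bar> \<le> \<bar>n - m\<bar>"
      proof -
        have "\<bar>n - m\<bar> = int K * \<bar>p0\<bar>" using np K by (simp add: abs_mult)
        thus ?thesis using K by (simp add: mult_le_cancel_right1)
      qed
      hence p0M: "p0 \<in> {-int M..int M}" using M by auto
      have "(\<Sum>p\<in>{-int M..int M}. tm K \<tau> 0 (m + int K * p) * (if m + int K * p - n = 0 then 1 else 0))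
            = (\<Sum>p\<in>{-int M..int M}. if p = p0 then tm K \<tau> 0 (m + int K * p) else 0)"
        unfolding iff by (intro sum.cong refl) simp
      also have "\<dots> = tm K \<tau> 0 n" using p0M np by simp
      finally show ?thesis using True by (simp add: v_def)
    next
      case False
      have "m + int K * p - n \<noteq> 0" for p
      proof
        assume "m + int K * p - n = 0"
        hence "n = m + int K * p" by simp
        hence "n mod int K = m mod int K" by simp
        thus False using False by simp
      qed
      thus ?thesis using False by (simp add: v_def)
    qed
    finally show "I M = v" .
  qed
  hence "(I \<longlongrightarrow> v) sequentially" by (rule tendsto_eventually)
  hence "J = v" using IJ by (intro tendsto_unique[OF _ IJ]) simp_all
  thus ?thesis using J unfolding g_def e_def v_def by simp
qed


lemma key_identity:
  fixes a b k \<tau> :: complex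
  assumes k: "k \<noteq> 0" "k + 4 \<noteq> 0"
  shows "\<tau> / 4 * a^2 + \<tau> / k * b^2 = \<tau> / (k+4) * (a+b)^2 + \<tau> / (4*k*(k+4)) * (k*a - 4*b)^2"
proof -
  define D where "D = 4*k*(k+4)"
  have D: "D \<noteq> 0" using k by (simp add: D_def)
  have 1: "D * (\<tau> / 4 * a^2) = k*(k+4)*\<tau>*a^2" by (simp add: D_def)
  have 2: "D * (\<tau> / k * b^2) = 4*(k+4)*\<tau>*b^2" using k by (simp add: D_def)
  have 3: "D * (\<tau> / (k+4) * (a+b)^2) = 4*k*\<tau>*(a+b)^2" using k by (simp add: D_def)
  have 4: "D * (\<tau> / D * (k*a - 4*b)^2) = \<tau>*(k*a - 4*b)^2" using D by simp
  have "D * (\<tau> / 4 * a^2 + \<tau> / k * b^2) = D * (\<tau> / (k+4) * (a+b)^2 + \<tau> / D * (k*a - 4*b)^2)"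
    unfolding distrib_left 1 2 3 4 by (simp add: D_def power2_eq_square algebra_simps)
  hence "\<tau> / 4 * a^2 + \<tau> / k * b^2 = \<tau> / (k+4) * (a+b)^2 + \<tau> / D * (k*a - 4*b)^2" using D by simp
  thus ?thesis by (simp add: D_def)
qed

lemma tm_prod_identity:
  assumes K: "K > 0"
  shows "tm 4 \<tau> z n1 * tm K \<tau> z n2 = tm (K+4) \<tau> z (n1 + n2) * tm (4*K*(K+4)) \<tau> 0 (int K * n1 - 4 * n2)"
proof -
  define a :: complex where "a = of_int n1"
  define b :: complex where "b = of_int n2"
  define k :: complex where "k = of_nat K"
  have k: "k \<noteq> 0" "k + 4 \<noteq> 0" using K by (simp_all add: k_def) (metis of_nat_numeral of_nat_add of_nat_eq_0_iff add_is_0 zero_neq_numeral)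
  have key: "\<tau> / 4 * a^2 + \<tau> / k * b^2 = \<tau> / (k+4) * (a+b)^2 + \<tau> / (4*k*(k+4)) * (k*a - 4*b)^2"
    by (rule key_identity[OF k])
  have "pi * \<i> * (\<tau> / 4) * a^2 + 2 * pi * \<i> * a * z + (pi * \<i> * (\<tau> / k) * b^2 + 2 * pi * \<i> * b * z)
      = pi * \<i> * (\<tau> / (k+4)) * (a+b)^2 + 2 * pi * \<i> * (a+b) * z + (pi * \<i> * (\<tau> / (4*k*(k+4))) * (k*a - 4*b)^2 + 2 * pi * \<i> * (k*a-4*b) * 0)"
  proof -
    have "pi * \<i> * (\<tau> / 4 * a^2 + \<tau> / k * b^2) = pi * \<i> * (\<tau> / (k+4) * (a+b)^2 + \<tau> / (4*k*(k+4)) * (k*a - 4*b)^2)"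
      by (simp only: key)
    thus ?thesis by (simp add: algebra_simps)
  qed
  thus ?thesis
    by (simp add: tm_def exp_add[symmetric] a_def b_def k_def)
qed

definition CW :: "nat \<Rightarrow> complex \<Rightarrow> int \<Rightarrow> int \<Rightarrow> int \<Rightarrow> complex" where
  "CW K \<tau> a b j = (\<Sum>\<^sub>\<infinity>e::int. tm (4*K*(K+4)) \<tau> 0 ((int K * a - 4 * b + 4 * int K * j) + (4 * int K * int (K+4)) * e))"

lemma Th_prod:
  assumes K: "K > 0" and t: "Im \<tau> > 0"
  shows "Th 4 \<tau> a z * Th K \<tau> b z = (\<Sum>j\<in>{0..<int (K+4)}. CW K \<tau> a b j * Th (K+4) \<tau> (a + b - int K * j) z)"
proof -
  define N where "N = K + 4"
  define f where "f p = tm 4 \<tau> z (a + 4 * p)" for p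
  define g where "g q = tm K \<tau> z (b + int K * q)" for q
  define F where "F x = f (fst x) * g (snd x)" for x :: "int \<times> int"
  have fs: "(\<lambda>p. norm (f p)) summable_on UNIV" unfolding f_def
    using tm_summable[of 4 \<tau> 4 z a] t by simp
  have gs: "(\<lambda>q. norm (g q)) summable_on UNIV" unfolding g_def
    using tm_summable[of K \<tau> "int K" z b] t K by simp
  have fh: "(f has_sum Th 4 \<tau> a z) UNIV" unfolding f_def using Th_has_sum[of 4 \<tau> z a] t by simp
  have gh: "(g has_sum Th K \<tau> b z) UNIV" unfolding g_def using Th_has_sum[OF K t] by simp
  have Fabs: "(\<lambda>x. norm (F x)) summable_on (Sigma UNIV (\<lambda>_::int. UNIV::int set))"
  proof (subst Infinite_Sum.abs_summable_on_Sigma_iff, intro conjI ballI)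
    fix p :: int
    show "(\<lambda>q. norm (F (p, q))) summable_on UNIV"
      unfolding F_def by (simp add: norm_mult) (intro summable_on_cmult_right gs)
  next
    have "(\<Sum>\<^sub>\<infinity>q. norm (F (p, q))) = norm (f p) * (\<Sum>\<^sub>\<infinity>q. norm (g q))" for p
      unfolding F_def by (simp add: norm_mult infsum_cmult_right[OF gs[THEN summable_on_subset_banach]] infsum_cmult_right gs)
    moreover have "(\<lambda>p. norm (norm (f p) * (\<Sum>\<^sub>\<infinity>q. norm (g q)))) summable_on UNIV"
    proof -
      have "(\<Sum>\<^sub>\<infinity>q. norm (g q)) \<ge> 0" by (rule infsum_nonneg) simp
      thus ?thesis by (simp add: abs_mult) (intro summable_on_cmult_left fs)
    qed
    ultimately show "(\<lambda>p. norm (\<Sum>\<^sub>\<infinity>q\<in>UNIV. norm (F (p, q)))) summable_on UNIV" by simp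
  qed
  have Fh: "(F has_sum (Th 4 \<tau> a z * Th K \<tau> b z)) (Sigma UNIV (\<lambda>_. UNIV))"
  proof (rule has_sum_SigmaI)
    show "((\<lambda>q. F (p, q)) has_sum (f p * Th K \<tau> b z)) UNIV" for p
      unfolding F_def by (simp add: has_sum_cmult_right gh)
    show "((\<lambda>p. f p * Th K \<tau> b z) has_sum (Th 4 \<tau> a z * Th K \<tau> b z)) UNIV"
      by (rule has_sum_cmult_left[OF fh])
    show "F summable_on Sigma UNIV (\<lambda>_. UNIV)"
      by (rule abs_summable_summable[OF Fabs])
  qed
  define h where "h x = (snd x, snd x - fst x)" for x :: "int \<times> int"
  have hb: "bij_betw h UNIV UNIV"
    by (rule bij_betwI[of _ _ _ "\<lambda>y. (fst y - snd y, fst y)"]) (auto simp: h_def)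
  have Gh: "((\<lambda>x. F (h x)) has_sum (Th 4 \<tau> a z * Th K \<tau> b z)) (Sigma UNIV (\<lambda>_. UNIV))"
    using Fh by (simp add: has_sum_reindex_bij_betw[OF hb])
  define W where "W d = tm (4*K*N) \<tau> 0 (int K * a - 4 * b + 4 * int K * d)" for d
  have Geq: "F (h (d, p)) = W d * tm N \<tau> z ((a + b - int K * d) + int N * p)" for d p
  proof -
    have "F (h (d, p)) = tm 4 \<tau> z (a + 4 * p) * tm K \<tau> z (b + int K * (p - d))"
      by (simp add: F_def h_def f_def g_def)
    also have "\<dots> = tm (K+4) \<tau> z ((a + 4 * p) + (b + int K * (p - d))) * tm (4*K*(K+4)) \<tau> 0 (int K * (a + 4 * p) - 4 * (b + int K * (p - d)))"
      by (rule tm_prod_identity[OF K])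
    also have "\<dots> = W d * tm N \<tau> z ((a + b - int K * d) + int N * p)"
      unfolding W_def N_def by (simp add: algebra_simps)
    finally show ?thesis .
  qed
  have N: "N > 0" by (simp add: N_def)
  have Hh: "((\<lambda>d. W d * Th N \<tau> (a + b - int K * d) z) has_sum (Th 4 \<tau> a z * Th K \<tau> b z)) UNIV"
  proof (rule has_sum_Sigma'[OF Gh])
    fix d :: int
    show "((\<lambda>p. F (h (d, p))) has_sum (W d * Th N \<tau> (a + b - int K * d) z)) UNIV"
      unfolding Geq by (intro has_sum_cmult_right Th_has_sum N t)
  qed
  define k where "k x = fst x + int N * snd x" for x :: "int \<times> int"
  have kb: "bij_betw k (Sigma {0..<int N} (\<lambda>_. UNIV)) UNIV"
    by (rule bij_betwI[of _ _ _ "\<lambda>d. (d mod int N, d div int N)"]) (use N in \<open>auto simp: k_def\<close>)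
  have Hh2: "((\<lambda>x. W (k x) * Th N \<tau> (a + b - int K * k x) z) has_sum (Th 4 \<tau> a z * Th K \<tau> b z)) (Sigma {0..<int N} (\<lambda>_. UNIV))"
    using has_sum_reindex_bij_betw[OF kb, of "\<lambda>d. W d * Th N \<tau> (a + b - int K * d) z"] Hh by blast
  have Hh3: "((\<lambda>j. CW K \<tau> a b j * Th N \<tau> (a + b - int K * j) z) has_sum (Th 4 \<tau> a z * Th K \<tau> b z)) {0..<int N}"
  proof (rule has_sum_Sigma'[OF Hh2])
    fix j :: int
    have Wk: "W (k (j, e)) = tm (4*K*(K+4)) \<tau> 0 ((int K * a - 4 * b + 4 * int K * j) + (4 * int K * int (K+4)) * e)" for e
      by (simp add: W_def k_def N_def algebra_simps)
    have Thk: "Th N \<tau> (a + b - int K * k (j, e)) z = Th N \<tau> (a + b - int K * j) z" for e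
      using Th_shift[of N \<tau> "a + b - int K * j" "- int K * e" z] by (simp add: k_def algebra_simps)
    have c: "4 * int K * int (K+4) \<noteq> 0" using K by simp
    have "(\<lambda>e. tm (4*K*(K+4)) \<tau> 0 ((int K * a - 4 * b + 4 * int K * j) + (4 * int K * int (K+4)) * e)) summable_on UNIV"
      by (rule abs_summable_summable, rule tm_summable[OF _ t c]) (use K in simp)
    hence "((\<lambda>e. W (k (j, e))) has_sum CW K \<tau> a b j) UNIV"
      unfolding Wk CW_def by (rule has_sum_infsum)
    thus "((\<lambda>e. W (k (j, e)) * Th N \<tau> (a + b - int K * k (j, e)) z) has_sum (CW K \<tau> a b j * Th N \<tau> (a + b - int K * j) z)) UNIV"
      unfolding Thk by (rule has_sum_cmult_left)
  qed
  have "((\<lambda>j. CW K \<tau> a b j * Th N \<tau> (a + b - int K * j) z) has_sum (\<Sum>j\<in>{0..<int N}. CW K \<tau> a b j * Th N \<tau> (a + b - int K * j) z)) {0..<int N}"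
    by (rule has_sum_finite) simp
  from has_sum_unique[OF Hh3 this] show ?thesis by (simp add: N_def)
qed


lemma fsum_apply: "(\<Sum>i\<in>A. F i) z = (\<Sum>i\<in>A. F i z)"
  by (induction A rule: infinite_finite_induct) auto

lemma Hspace_zero: "(\<lambda>z. 0) \<in> Hspace K \<tau>"
  unfolding Hspace_def by (intro CollectI exI[of _ "\<lambda>_. 0"]) simp

lemma Hspace_add: "f \<in> Hspace K \<tau> \<Longrightarrow> g \<in> Hspace K \<tau> \<Longrightarrow> (\<lambda>z. f z + g z) \<in> Hspace K \<tau>"
proof -
  assume "f \<in> Hspace K \<tau>" "g \<in> Hspace K \<tau>"
  then obtain c d where c: "f = (\<lambda>z. \<Sum>m<K. c m * theta m K \<tau> z)" and d: "g = (\<lambda>z. \<Sum>m<K. d m * theta m K \<tau> z)"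
    unfolding Hspace_def by blast
  show ?thesis unfolding Hspace_def
    by (intro CollectI exI[of _ "\<lambda>m. c m + d m"]) (simp add: c d fun_eq_iff sum.distrib distrib_right)
qed

lemma Hspace_scale: "f \<in> Hspace K \<tau> \<Longrightarrow> (\<lambda>z. a * f z) \<in> Hspace K \<tau>"
proof -
  assume "f \<in> Hspace K \<tau>"
  then obtain c where c: "f = (\<lambda>z. \<Sum>m<K. c m * theta m K \<tau> z)"
    unfolding Hspace_def by blast
  show ?thesis unfolding Hspace_def
    by (intro CollectI exI[of _ "\<lambda>m. a * c m"]) (simp add: c fun_eq_iff sum_distrib_left mult.assoc)
qed

lemma Hspace_diff: "f \<in> Hspace K \<tau> \<Longrightarrow> g \<in> Hspace K \<tau> \<Longrightarrow> (\<lambda>z. f z - g z) \<in> Hspace K \<tau>"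
  using Hspace_add[of f K \<tau> "\<lambda>z. (-1) * g z"] Hspace_scale[of g K \<tau> "-1"] by simp

lemma Hspace_sum: "finite A \<Longrightarrow> (\<And>i. i \<in> A \<Longrightarrow> F i \<in> Hspace K \<tau>) \<Longrightarrow> (\<lambda>z. \<Sum>i\<in>A. F i z) \<in> Hspace K \<tau>"
proof (induction A rule: finite_induct)
  case empty thus ?case using Hspace_zero by simp
next
  case (insert x A) thus ?case using Hspace_add[of "F x" K \<tau> "\<lambda>z. \<Sum>i\<in>A. F i z"] by simp
qed

lemma Th_in_Hspace:
  assumes K: "K > 0"
  shows "Th K \<tau> r \<in> Hspace K \<tau>"
proof -
  define m0 where "m0 = nat (r mod int K)"
  have m0: "m0 < K" using K by (simp add: m0_def nat_less_iff)
  have m0': "int m0 = r mod int K" using K by (simp add: m0_def)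
  have "Th K \<tau> r = (\<lambda>z. \<Sum>m<K. (if m = m0 then 1 else 0) * theta m K \<tau> z)"
  proof
    fix z
    have "(\<Sum>m<K. (if m = m0 then 1 else 0) * theta m K \<tau> z) = theta m0 K \<tau> z"
    proof -
      have "(\<Sum>m<K. (if m = m0 then 1 else 0) * theta m K \<tau> z) = (\<Sum>m<K. if m = m0 then theta m K \<tau> z else 0)"
        by (intro sum.cong) auto
      also have "\<dots> = theta m0 K \<tau> z" using m0 by (simp add: sum.delta')
      finally show ?thesis .
    qed
    also have "\<dots> = Th K \<tau> r z" unfolding theta_Th m0' by (rule Th_mod[symmetric])
    finally show "Th K \<tau> r z = (\<Sum>m<K. (if m = m0 then 1 else 0) * theta m K \<tau> z)" by simp
  qed
  thus ?thesis unfolding Hspace_def mem_Collect_eq by (rule exI[of _ "\<lambda>m. if m = m0 then 1 else 0"])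
qed

lemma Hspace_holo:
  assumes K: "K > 0" and t: "Im \<tau> > 0" and f: "f \<in> Hspace K \<tau>"
  shows "f holomorphic_on UNIV"
proof -
  obtain c where c: "f = (\<lambda>z. \<Sum>m<K. c m * theta m K \<tau> z)" using f unfolding Hspace_def by blast
  have "(\<lambda>z. \<Sum>m<K. c m * Th K \<tau> (int m) z) holomorphic_on UNIV"
    by (intro holomorphic_on_sum holomorphic_on_mult holomorphic_on_const Th_holo[OF K t])
  thus ?thesis by (simp add: c theta_Th)
qed

lemma holo_mult_zero:
  fixes g h :: "complex \<Rightarrow> complex"
  assumes g: "g holomorphic_on UNIV" and h: "h holomorphic_on UNIV" and z0: "h z0 \<noteq> 0"
    and z: "\<And>z. h z * g z = 0"
  shows "g w = 0"
proof -
  have "continuous (at z0) h"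
    using holomorphic_on_imp_differentiable_at[OF h open_UNIV] field_differentiable_imp_continuous_at by blast
  then obtain e where e: "e > 0" "\<And>y. dist z0 y < e \<Longrightarrow> h y \<noteq> 0"
    using continuous_at_avoid[of z0 h 0] z0 by blast
  have gz: "g y = 0" if "y \<in> ball z0 e" for y
  proof -
    have "h y \<noteq> 0" using e(2)[of y] that by simp
    thus ?thesis using z[of y] by simp
  qed
  have lp: "z0 islimpt ball z0 e" using e by (simp add: islimpt_ball)
  show ?thesis
    by (rule analytic_continuation[OF g open_UNIV connected_UNIV subset_UNIV UNIV_I lp gz UNIV_I])
qed

lemma theta4_minus_Th: "theta4_minus \<tau> = (\<lambda>z. Th 4 \<tau> 1 z - Th 4 \<tau> 3 z)"
  by (simp add: fun_eq_iff theta4_minus_def theta_Th)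

lemma theta4_holo: "Im \<tau> > 0 \<Longrightarrow> theta4_minus \<tau> holomorphic_on UNIV"
  unfolding theta4_minus_Th by (intro holomorphic_intros Th_holo) auto

lemma theta4_odd: "theta4_minus \<tau> (-z) = - theta4_minus \<tau> z"
proof -
  have "Th 4 \<tau> (-1) z = Th 4 \<tau> 3 z" by (rule Th_cong) simp
  moreover have "Th 4 \<tau> (-3) z = Th 4 \<tau> 1 z" by (rule Th_cong) simp
  ultimately show ?thesis unfolding theta4_minus_Th by (simp add: Th_neg)
qed

lemma theta4_fourier:
  assumes t: "Im \<tau> > 0"
  shows "((\<lambda>x::real. theta4_minus \<tau> (of_real x) * exp (- 2 * pi * \<i> * of_int 1 * of_real x)) has_integral tm 4 \<tau> 0 1) {0..1}"
proof -
  have "((\<lambda>x::real. Th 4 \<tau> 1 (of_real x) * exp (- 2 * pi * \<i> * of_int 1 * of_real x)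
        - Th 4 \<tau> 3 (of_real x) * exp (- 2 * pi * \<i> * of_int 1 * of_real x)) has_integral
        ((if 1 mod int 4 = 1 mod int 4 then tm 4 \<tau> 0 1 else 0) - (if 1 mod int 4 = 3 mod int 4 then tm 4 \<tau> 0 1 else 0))) {0..1}"
    by (intro has_integral_diff Th_fourier t) simp_all
  thus ?thesis unfolding theta4_minus_Th by (simp add: left_diff_distrib)
qed

lemma tm_nonzero: "tm K \<tau> z n \<noteq> 0"
  by (simp add: tm_def)

lemma theta4_nonzero:
  assumes t: "Im \<tau> > 0"
  shows "theta4_minus \<tau> \<noteq> (\<lambda>_. 0)"
proof
  assume "theta4_minus \<tau> = (\<lambda>_. 0)"
  hence "((\<lambda>x::real. theta4_minus \<tau> (of_real x) * exp (- 2 * pi * \<i> * of_int 1 * of_real x)) has_integral 0) {0..1}"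
    by simp
  with theta4_fourier[OF t] have "tm 4 \<tau> 0 1 = 0" by (rule has_integral_unique)
  thus False using tm_nonzero by blast
qed

lemma theta4_nonzero_pt:
  assumes t: "Im \<tau> > 0"
  obtains z0 where "theta4_minus \<tau> z0 \<noteq> 0"
  using theta4_nonzero[OF t] by fastforce

lemma prod_Th_in_Hspace:
  assumes K: "K > 0" and t: "Im \<tau> > 0"
  shows "(\<lambda>z. Th 4 \<tau> a z * Th K \<tau> b z) \<in> Hspace (K+4) \<tau>"
  unfolding Th_prod[OF K t]
  by (intro Hspace_sum Hspace_scale Th_in_Hspace) auto

lemma prod_in_Hspace:
  assumes K: "K > 0" and t: "Im \<tau> > 0" and f: "f \<in> Hspace K \<tau>"
  shows "(\<lambda>z. theta4_minus \<tau> z * f z) \<in> Hspace (K+4) \<tau>"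
proof -
  obtain c where c: "f = (\<lambda>z. \<Sum>m<K. c m * theta m K \<tau> z)" using f unfolding Hspace_def by blast
  have eq: "(\<lambda>z. theta4_minus \<tau> z * f z) =
     (\<lambda>z. \<Sum>m<K. c m * (Th 4 \<tau> 1 z * Th K \<tau> (int m) z - Th 4 \<tau> 3 z * Th K \<tau> (int m) z))"
  proof
    fix z
    have "theta4_minus \<tau> z * f z = (\<Sum>m<K. theta4_minus \<tau> z * (c m * theta m K \<tau> z))"
      by (simp add: c sum_distrib_left)
    also have "\<dots> = (\<Sum>m<K. c m * (Th 4 \<tau> 1 z * Th K \<tau> (int m) z - Th 4 \<tau> 3 z * Th K \<tau> (int m) z))"
      by (intro sum.cong refl) (simp add: theta4_minus_Th theta_Th algebra_simps)
    finally show "theta4_minus \<tau> z * f z = (\<Sum>m<K. c m * (Th 4 \<tau> 1 z * Th K \<tau> (int m) z - Th 4 \<tau> 3 z * Th K \<tau> (int m) z))" .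
  qed
  show ?thesis unfolding eq
    by (intro Hspace_sum Hspace_scale Hspace_diff prod_Th_in_Hspace K t) auto
qed

lemma odd_proj:
  assumes f: "f \<in> Hminus K \<tau>"
  obtains c where "\<And>z. f z = (\<Sum>m<K. c m * (Th K \<tau> (int m) z - Th K \<tau> (- int m) z))"
proof -
  obtain c where c: "f = (\<lambda>z. \<Sum>m<K. c m * theta m K \<tau> z)" and odd: "\<And>z. f (-z) = - f z"
    using f unfolding Hminus_def Hspace_def by blast
  have "f z = (\<Sum>m<K. (c m / 2) * (Th K \<tau> (int m) z - Th K \<tau> (- int m) z))" for z
  proof -
    have "f z = (f z - f (-z)) / 2" using odd[of z] by simp
    also have "f z - f (-z) = (\<Sum>m<K. c m * (Th K \<tau> (int m) z - Th K \<tau> (- int m) z))"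
      by (simp add: c theta_Th Th_neg sum_subtractf[symmetric] right_diff_distrib)
    also have "(\<Sum>m<K. c m * (Th K \<tau> (int m) z - Th K \<tau> (- int m) z)) / 2 = (\<Sum>m<K. (c m / 2) * (Th K \<tau> (int m) z - Th K \<tau> (- int m) z))"
      by (simp add: sum_divide_distrib)
    finally show ?thesis .
  qed
  thus ?thesis by (rule that)
qed


interpretation FV: vector_space "\<lambda>(c::complex) (f::complex\<Rightarrow>complex) z. c * f z"
  by unfold_locales (simp_all add: fun_eq_iff algebra_simps)

lemma neg_mod_eq:
  assumes "0 < j" "j < K"
  shows "(- int j) mod int K = int K - int j"
proof -
  have "(- int j) = (int K - int j) + int K * (-1)" by simp
  hence "(- int j) mod int K = ((int K - int j) + int K * (-1)) mod int K" by simp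
  also have "\<dots> = (int K - int j) mod int K" by (rule mod_mult_self2)
  also have "\<dots> = int K - int j" using assms by (intro mod_pos_pos_trivial) auto
  finally show ?thesis .
qed

lemma e_fourier:
  assumes k: "k \<ge> 1" and t: "Im \<tau> > 0" and i: "i \<le> k" and j: "j \<le> k"
  shows "((\<lambda>x::real. (Th (2*k) \<tau> (int j) (of_real x) + Th (2*k) \<tau> (- int j) (of_real x)) * exp (- 2 * pi * \<i> * of_int (int i) * of_real x))
          has_integral (if i = j then (if i = 0 \<or> i = k then 2 else 1) * tm (2*k) \<tau> 0 (int i) else 0)) {0..1}"
proof -
  define K where "K = 2 * k"
  have K: "K > 0" using k by (simp add: K_def)
  have iK: "i < K" "j < K" using i j k by (auto simp: K_def)
  have m1: "int i mod int K = int j mod int K \<longleftrightarrow> i = j"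
    using iK by (simp add: mod_pos_pos_trivial)
  have m2: "int i mod int K = (- int j) mod int K \<longleftrightarrow> (i = j \<and> (i = 0 \<or> i = k))"
  proof (cases "j = 0")
    case True thus ?thesis using iK by (auto simp: mod_pos_pos_trivial)
  next
    case False
    hence "(- int j) mod int K = int K - int j" using iK by (intro neg_mod_eq) auto
    moreover have "int i mod int K = int i" using iK by (simp add: mod_pos_pos_trivial)
    ultimately show ?thesis using False i j by (auto simp: K_def)
  qed
  define V where "V = (if i = j then (if i = 0 \<or> i = k then 2 else 1) * tm K \<tau> 0 (int i) else 0)"
  have H: "((\<lambda>x::real. Th K \<tau> (int j) (of_real x) * exp (- 2 * pi * \<i> * of_int (int i) * of_real x)
        + Th K \<tau> (- int j) (of_real x) * exp (- 2 * pi * \<i> * of_int (int i) * of_real x)) has_integral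
        ((if int i mod int K = int j mod int K then tm K \<tau> 0 (int i) else 0) + (if int i mod int K = (- int j) mod int K then tm K \<tau> 0 (int i) else 0))) {0..1}"
    by (intro has_integral_add Th_fourier K t)
  have eqv: "(if int i mod int K = int j mod int K then tm K \<tau> 0 (int i) else 0) + (if int i mod int K = (- int j) mod int K then tm K \<tau> 0 (int i) else 0) = V"
    unfolding m1 m2 V_def by auto
  from H have "((\<lambda>x::real. (Th K \<tau> (int j) (of_real x) + Th K \<tau> (- int j) (of_real x)) * exp (- 2 * pi * \<i> * of_int (int i) * of_real x)) has_integral V) {0..1}"
    unfolding eqv by (simp only: distrib_right)
  thus ?thesis by (simp only: K_def V_def)
qed

lemma e_indep:
  assumes k: "k \<ge> 1" and t: "Im \<tau> > 0" and J: "J \<subseteq> {0..k}"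
    and z: "\<And>z. (\<Sum>j\<in>J. u j * (Th (2*k) \<tau> (int j) z + Th (2*k) \<tau> (- int j) z)) = 0"
    and i: "i \<in> J"
  shows "u i = 0"
proof -
  define E where "E x = exp (- 2 * pi * \<i> * of_int (int i) * of_real x)" for x :: real
  define v where "v j = (if i = j then (if i = 0 \<or> i = k then 2 else 1) * tm (2*k) \<tau> 0 (int i) else 0)" for j
  have fin: "finite J" using J finite_subset by blast
  have "((\<lambda>x::real. \<Sum>j\<in>J. u j * ((Th (2*k) \<tau> (int j) (of_real x) + Th (2*k) \<tau> (- int j) (of_real x)) * E x))
         has_integral (\<Sum>j\<in>J. u j * v j)) {0..1}"
    unfolding E_def v_def
    by (intro has_integral_sum fin has_integral_mult_right e_fourier k t) (use J i in auto)
  moreover have "(\<lambda>x::real. \<Sum>j\<in>J. u j * ((Th (2*k) \<tau> (int j) (of_real x) + Th (2*k) \<tau> (- int j) (of_real x)) * E x)) = (\<lambda>x. 0)"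
  proof
    fix x :: real
    have "(\<Sum>j\<in>J. u j * ((Th (2*k) \<tau> (int j) (of_real x) + Th (2*k) \<tau> (- int j) (of_real x)) * E x))
        = (\<Sum>j\<in>J. u j * (Th (2*k) \<tau> (int j) (of_real x) + Th (2*k) \<tau> (- int j) (of_real x))) * E x"
      by (simp add: sum_distrib_right mult.assoc)
    also have "\<dots> = 0" using z by simp
    finally show "(\<Sum>j\<in>J. u j * ((Th (2*k) \<tau> (int j) (of_real x) + Th (2*k) \<tau> (- int j) (of_real x)) * E x)) = 0" .
  qed
  ultimately have "(\<Sum>j\<in>J. u j * v j) = 0" using has_integral_unique has_integral_0 by metis
  moreover have "(\<Sum>j\<in>J. u j * v j) = u i * ((if i = 0 \<or> i = k then 2 else 1) * tm (2*k) \<tau> 0 (int i))"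
  proof -
    have "(\<Sum>j\<in>J. u j * v j) = (\<Sum>j\<in>J. if j = i then u i * ((if i = 0 \<or> i = k then 2 else 1) * tm (2*k) \<tau> 0 (int i)) else 0)"
      by (intro sum.cong) (auto simp: v_def)
    also have "\<dots> = u i * ((if i = 0 \<or> i = k then 2 else 1) * tm (2*k) \<tau> 0 (int i))"
      using fin i by (simp add: sum.delta)
    finally show ?thesis .
  qed
  ultimately show ?thesis using tm_nonzero by (auto split: if_splits)
qed


lemma Hplus_zero: "(\<lambda>z. 0) \<in> Hplus K \<tau>"
  unfolding Hplus_def using Hspace_zero by simp

lemma Hplus_add: "f \<in> Hplus K \<tau> \<Longrightarrow> g \<in> Hplus K \<tau> \<Longrightarrow> (\<lambda>z. f z + g z) \<in> Hplus K \<tau>"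
  unfolding Hplus_def using Hspace_add by auto

lemma Hplus_scale: "f \<in> Hplus K \<tau> \<Longrightarrow> (\<lambda>z. a * f z) \<in> Hplus K \<tau>"
  unfolding Hplus_def using Hspace_scale by auto

lemma Hminus_scale: "f \<in> Hminus K \<tau> \<Longrightarrow> (\<lambda>z. a * f z) \<in> Hminus K \<tau>"
  unfolding Hminus_def using Hspace_scale by auto

lemma Th_shift': "Th K \<tau> (m + int K * j) = Th K \<tau> m"
  by (rule ext) (rule Th_shift)

lemma partB:
  assumes t: "Im \<tau> > 0" and k: "k \<ge> 1"
  shows "bij_betw (\<lambda>f z. theta4_minus \<tau> z * f z) (Hplus (2*k) \<tau>) (Hminus (2*k+4) \<tau>)"
proof -
  define K where "K = 2 * k"
  define N where "N = K + 4"
  have KN: "2 * k + 4 = N" by (simp add: K_def N_def)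
  have K: "K > 0" using k by (simp add: K_def)
  define \<Phi> where "\<Phi> f = (\<lambda>z. theta4_minus \<tau> z * f z)" for f :: "complex \<Rightarrow> complex"
  obtain z0 where z0: "theta4_minus \<tau> z0 \<noteq> 0" using theta4_nonzero_pt[OF t] by blast
  have zero_div: "g z = 0" if "g \<in> Hspace K \<tau>" "\<And>z. theta4_minus \<tau> z * g z = 0" for g z
    by (rule holo_mult_zero[OF Hspace_holo[OF K t that(1)] theta4_holo[OF t] z0 that(2)])
  have inj: "f = g" if "f \<in> Hspace K \<tau>" "g \<in> Hspace K \<tau>" "\<Phi> f = \<Phi> g" for f g
  proof
    fix z
    have "(\<lambda>z. f z - g z) \<in> Hspace K \<tau>" using that by (intro Hspace_diff)
    moreover have "theta4_minus \<tau> w * (f w - g w) = 0" for w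
      using fun_cong[OF that(3), of w] by (simp add: \<Phi>_def right_diff_distrib)
    ultimately have "f z - g z = 0" using zero_div[of "\<lambda>z. f z - g z"] by blast
    thus "f z = g z" by simp
  qed
  have img_sub: "\<Phi> f \<in> Hminus N \<tau>" if "f \<in> Hplus K \<tau>" for f
  proof -
    have "\<Phi> f \<in> Hspace N \<tau>" unfolding \<Phi>_def N_def
      using that prod_in_Hspace[OF K t] by (auto simp: Hplus_def)
    moreover have "\<Phi> f (-z) = - \<Phi> f z" for z
      using that by (simp add: \<Phi>_def Hplus_def theta4_odd)
    ultimately show ?thesis by (simp add: Hminus_def)
  qed
  define e where "e j = (\<lambda>z. Th K \<tau> (int j) z + Th K \<tau> (- int j) z)" for j :: nat
  define od where "od j = (\<lambda>z. Th N \<tau> (int j) z - Th N \<tau> (- int j) z)" for j :: nat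
  define B where "B = (\<lambda>j. \<Phi> (e j)) ` {0..k}"
  define OS where "OS = od ` {1..k+1}"
  have e_in: "e j \<in> Hplus K \<tau>" for j
  proof -
    have "e j \<in> Hspace K \<tau>" unfolding e_def by (intro Hspace_add Th_in_Hspace K)
    moreover have "e j (-z) = e j z" for z by (simp add: e_def Th_neg)
    ultimately show ?thesis by (simp add: Hplus_def)
  qed
  have e_sp: "e j \<in> Hspace K \<tau>" for j using e_in by (simp add: Hplus_def)
  have inj_e: "inj_on (\<lambda>j. \<Phi> (e j)) {0..k}"
  proof (rule inj_onI)
    fix i j assume i: "i \<in> {0..k}" and j: "j \<in> {0..k}" and eq: "\<Phi> (e i) = \<Phi> (e j)"
    have eij: "e i = e j" using inj[OF e_sp e_sp eq] .
    show "i = j"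
    proof (rule ccontr)
      assume ne: "i \<noteq> j"
      define u where "u l = (if l = i then 1 else (-1::complex))" for l
      have "(\<Sum>l\<in>{i,j}. u l * (Th (2*k) \<tau> (int l) z + Th (2*k) \<tau> (- int l) z)) = 0" for z
        using fun_cong[OF eij, of z] ne by (simp add: u_def e_def K_def)
      hence "u i = 0" by (intro e_indep[OF k t, of "{i,j}" u]) (use i j in auto)
      thus False by (simp add: u_def)
    qed
  qed
  have finB: "finite B" by (simp add: B_def)
  have cardB: "card B = k + 1" unfolding B_def using card_image[OF inj_e] by simp
  have indepB: "FV.independent B"
  proof
    assume "FV.dependent B"
    then obtain u where u: "\<exists>v\<in>B. u v \<noteq> 0" and s: "(\<Sum>v\<in>B. (\<lambda>z. u v * v z)) = 0"
      using FV.dependent_finite[OF finB] by blast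
    define w where "w j = u (\<Phi> (e j))" for j
    have s2: "(\<Sum>j\<in>{0..k}. (\<lambda>z. w j * \<Phi> (e j) z)) = 0"
      using s unfolding B_def sum.reindex[OF inj_e] by (simp add: w_def o_def)
    have "theta4_minus \<tau> z * (\<Sum>j\<in>{0..k}. w j * e j z) = 0" for z
    proof -
      have "(\<Sum>j\<in>{0..k}. (\<lambda>z. w j * \<Phi> (e j) z)) z = 0" using s2 by simp
      thus ?thesis by (simp add: fsum_apply \<Phi>_def sum_distrib_left algebra_simps)
    qed
    hence z: "(\<Sum>j\<in>{0..k}. w j * e j z) = 0" for z
      by (intro zero_div[of "\<lambda>z. \<Sum>j\<in>{0..k}. w j * e j z"] Hspace_sum Hspace_scale e_sp) auto
    have "w j = 0" if "j \<in> {0..k}" for j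
      by (rule e_indep[OF k t order_refl, of w]) (use z that in \<open>simp_all add: e_def K_def\<close>)
    with u show False by (auto simp: B_def w_def)
  qed
  have finO: "finite OS" by (simp add: OS_def)
  have cardO: "card OS \<le> k + 1" unfolding OS_def using card_image_le[of "{1..k+1}" od] by simp
  have d_span: "(\<lambda>z. Th N \<tau> (int m) z - Th N \<tau> (- int m) z) \<in> FV.span OS" if m: "m < N" for m
  proof -
    consider "m = 0" | "1 \<le> m \<and> m \<le> k + 1" | "m = k + 2" | "k + 3 \<le> m \<and> m < N"
      using m by (force simp: N_def K_def)
    thus ?thesis
    proof cases
      case 1
      hence "(\<lambda>z. Th N \<tau> (int m) z - Th N \<tau> (- int m) z) = 0" by (simp add: fun_eq_iff)
      thus ?thesis using FV.span_zero by simp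
    next
      case 2
      hence "(\<lambda>z. Th N \<tau> (int m) z - Th N \<tau> (- int m) z) \<in> OS" unfolding OS_def od_def by auto
      thus ?thesis by (rule FV.span_base)
    next
      case 3
      have a: "Th N \<tau> (- int m + int N * 1) = Th N \<tau> (- int m)" by (rule Th_shift')
      have b: "- int m + int N * 1 = int m" using 3 by (simp add: N_def K_def)
      have "Th N \<tau> (- int m) = Th N \<tau> (int m)" using a unfolding b by simp
      hence "(\<lambda>z. Th N \<tau> (int m) z - Th N \<tau> (- int m) z) = 0" by (simp add: fun_eq_iff)
      thus ?thesis using FV.span_zero by simp
    next
      case 4
      define m' where "m' = N - m"
      have m': "1 \<le> m'" "m' \<le> k + 1" using 4 by (auto simp: m'_def N_def K_def)
      have im: "int m = - int m' + int N * 1" using 4 by (simp add: m'_def)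
      have im2: "- int m = int m' + int N * (-1)" using 4 by (simp add: m'_def)
      have "Th N \<tau> (int m) = Th N \<tau> (- int m')" unfolding im by (rule Th_shift')
      moreover have "Th N \<tau> (- int m) = Th N \<tau> (int m')" unfolding im2 by (rule Th_shift')
      ultimately have "(\<lambda>z. Th N \<tau> (int m) z - Th N \<tau> (- int m) z) = (\<lambda>z. (-1) * od m' z)"
        by (simp add: fun_eq_iff od_def)
      moreover have "od m' \<in> FV.span OS" using m' by (intro FV.span_base) (auto simp: OS_def)
      ultimately show ?thesis using FV.span_scale[of "od m'" OS "-1"] by simp
    qed
  qed
  have Hm_span: "Hminus N \<tau> \<subseteq> FV.span OS"
  proof
    fix f assume f: "f \<in> Hminus N \<tau>"
    obtain c where c: "\<And>z. f z = (\<Sum>m<N. c m * (Th N \<tau> (int m) z - Th N \<tau> (- int m) z))"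
      using odd_proj[OF f] by blast
    have "f = (\<Sum>m<N. (\<lambda>z. c m * (Th N \<tau> (int m) z - Th N \<tau> (- int m) z)))"
      by (rule ext) (simp add: fsum_apply c)
    also have "\<dots> \<in> FV.span OS"
      by (intro FV.span_sum FV.span_scale[of "\<lambda>z. Th N \<tau> (int _) z - Th N \<tau> (- int _) z", simplified] d_span) auto
    finally show "f \<in> FV.span OS" .
  qed
  have B_sub: "B \<subseteq> FV.span OS"
    using Hm_span img_sub e_in by (auto simp: B_def)
  have O_sub: "OS \<subseteq> FV.span B"
  proof
    fix x assume x: "x \<in> OS"
    show "x \<in> FV.span B"
    proof (rule ccontr)
      assume nx: "x \<notin> FV.span B"
      have ind: "FV.independent (insert x B)" by (rule FV.independent_insertI[OF nx indepB])
      have sub: "insert x B \<subseteq> FV.span OS" using x B_sub FV.span_base[of x OS] by auto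
      have "card (insert x B) \<le> card OS" using FV.independent_span_bound[OF finO ind sub] by simp
      moreover have "x \<notin> B" using nx FV.span_base by blast
      hence "card (insert x B) = k + 2" using finB cardB by simp
      ultimately show False using cardO by simp
    qed
  qed
  have subsp: "FV.subspace (\<Phi> ` Hplus K \<tau>)"
    unfolding FV.subspace_def
  proof (intro conjI ballI allI)
    have "\<Phi> (\<lambda>z. 0) = 0" by (simp add: \<Phi>_def fun_eq_iff)
    thus "0 \<in> \<Phi> ` Hplus K \<tau>" using Hplus_zero by (metis image_eqI)
  next
    fix x y assume "x \<in> \<Phi> ` Hplus K \<tau>" "y \<in> \<Phi> ` Hplus K \<tau>"
    then obtain f g where f: "f \<in> Hplus K \<tau>" "x = \<Phi> f" and g: "g \<in> Hplus K \<tau>" "y = \<Phi> g" by blast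
    have "x + y = \<Phi> (\<lambda>z. f z + g z)" by (simp add: f g \<Phi>_def fun_eq_iff distrib_left)
    thus "x + y \<in> \<Phi> ` Hplus K \<tau>" using Hplus_add[OF f(1) g(1)] by blast
  next
    fix c :: complex and x assume "x \<in> \<Phi> ` Hplus K \<tau>"
    then obtain f where f: "f \<in> Hplus K \<tau>" "x = \<Phi> f" by blast
    have "(\<lambda>z. c * x z) = \<Phi> (\<lambda>z. c * f z)" by (simp add: f \<Phi>_def fun_eq_iff algebra_simps)
    thus "(\<lambda>z. c * x z) \<in> \<Phi> ` Hplus K \<tau>" using Hplus_scale[OF f(1)] by blast
  qed
  have B_img: "B \<subseteq> \<Phi> ` Hplus K \<tau>" using e_in by (auto simp: B_def)
  have "Hminus N \<tau> \<subseteq> \<Phi> ` Hplus K \<tau>"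
  proof -
    have "FV.span OS \<subseteq> FV.span B" by (rule FV.span_minimal[OF O_sub FV.subspace_span])
    moreover have "FV.span B \<subseteq> \<Phi> ` Hplus K \<tau>" by (rule FV.span_minimal[OF B_img subsp])
    ultimately show ?thesis using Hm_span by blast
  qed
  moreover have "\<Phi> ` Hplus K \<tau> \<subseteq> Hminus N \<tau>" using img_sub by blast
  moreover have "inj_on \<Phi> (Hplus K \<tau>)"
    by (rule inj_onI) (rule inj, auto simp: Hplus_def)
  ultimately have "bij_betw \<Phi> (Hplus K \<tau>) (Hminus N \<tau>)" by (simp add: bij_betw_def)
  thus ?thesis unfolding KN[symmetric] K_def[symmetric] \<Phi>_def[abs_def] .
qed


theorem corollary5p16:
  fixes \<tau> :: complex
  assumes "Im \<tau> > 0"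
  shows "(theta4_minus \<tau> \<in> Hminus 4 \<tau> \<and> theta4_minus \<tau> \<noteq> (\<lambda>_. 0) \<and>
          Hminus 4 \<tau> = {(\<lambda>z. c * theta4_minus \<tau> z) | c :: complex. True})
       \<and> (\<forall>k::nat. k \<ge> 1 \<longrightarrow>
            (\<forall>f \<in> Hplus (2*k) \<tau>. \<forall>g \<in> Hplus (2*k) \<tau>. \<forall>a b :: complex.
               (\<lambda>z. theta4_minus \<tau> z * (a * f z + b * g z)) =
               (\<lambda>z. a * (theta4_minus \<tau> z * f z) + b * (theta4_minus \<tau> z * g z)))
          \<and> bij_betw (\<lambda>f z. theta4_minus \<tau> z * f z) (Hplus (2*k) \<tau>) (Hminus (2*k+4) \<tau>))"
proof -
  have t: "Im \<tau> > 0" using assms .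
  have A1: "theta4_minus \<tau> \<in> Hminus 4 \<tau>"
  proof -
    have "theta4_minus \<tau> \<in> Hspace 4 \<tau>" unfolding theta4_minus_Th
      by (intro Hspace_diff Th_in_Hspace) auto
    thus ?thesis using theta4_odd by (simp add: Hminus_def)
  qed
  have A3: "Hminus 4 \<tau> = {(\<lambda>z. c * theta4_minus \<tau> z) | c :: complex. True}"
  proof (intro equalityI subsetI)
    fix f assume f: "f \<in> Hminus 4 \<tau>"
    obtain c where c: "\<And>z. f z = (\<Sum>m<4. c m * (Th 4 \<tau> (int m) z - Th 4 \<tau> (- int m) z))"
      using odd_proj[OF f] by blast
    have e1: "Th 4 \<tau> (-1) = Th 4 \<tau> 3" by (rule ext, rule Th_cong) simp
    have e2: "Th 4 \<tau> (-2) = Th 4 \<tau> 2" by (rule ext, rule Th_cong) simp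
    have e3: "Th 4 \<tau> (-3) = Th 4 \<tau> 1" by (rule ext, rule Th_cong) simp
    have s4: "{..<4::nat} = {0,1,2,3}" by auto
    have "f z = (c 1 - c 3) * theta4_minus \<tau> z" for z
      unfolding c s4 theta4_minus_Th by (simp add: e1 e2 e3 algebra_simps)
    thus "f \<in> {(\<lambda>z. c * theta4_minus \<tau> z) | c :: complex. True}" by blast
  next
    fix f assume "f \<in> {(\<lambda>z. c * theta4_minus \<tau> z) | c :: complex. True}"
    then obtain c where "f = (\<lambda>z. c * theta4_minus \<tau> z)" by blast
    thus "f \<in> Hminus 4 \<tau>" using Hminus_scale[OF A1] by simp
  qed
  show ?thesis
    using A1 A3 theta4_nonzero[OF t] partB[OF t]
    by (auto simp: fun_eq_iff algebra_simps)
qed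

end
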